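(* In the setting of the context, for all integers $m\ge1$ and $n\ge0$, $$\alpha(A_{n+m-1}A_{n+m-2}\cdots A_n)\ \ge\ \gamma(1-\gamma)^{m-1}\,\mathcal G_{[n,n+m)}.$$
   Context: Let $N\ge2$, $d\ge1$, $\mathcal N=\{1,\dots,N\}$, $\gamma\in(0,1)$. For each nonempty $S\subseteq\mathcal N$ and $j\in\mathcal N$ let $\omega_{S,j}:(\mathbb R^d)^N\to[0,\infty)$ satisfy $\sum_{j\in S}\omega_{S,j}(X)=1$ and $\omega_{S,j}(X)=0$ for $j\notin S$. For each time $r\ge0$ let $\{[i]_r:i\in\mathcal N\}$ be a partition of $\mathcal N$ ($[i]_r$ the block containing $i$) and $X_r\in(\mathbb R^d)^N$ a state. Let $W_r:=(\omega_{[i]_r,j}(X_r))_{i,j}$ and $A_r:=(1-\gamma)I_N+\gamma W_r$. For $n\ge0,m\ge1$ set $\mathcal T^{ij}_{[n,n+m)}:=\{r: n\le r<n+m,\ [i]_r=[j]_r\}$ and $\mathcal G_{[n,n+m)}:=\min_{i,j\in\mathcal N}|\mathcal T^{ij}_{[n,n+m)}|$. The ergodicity coefficient of $A=(a_{ij})$ is $\alpha(A):=\min_{i,j}\sum_{k}\min\{a_{ik},a_{jk}\}$. *)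

theory Defs
  imports "HOL-Analysis.Analysis"
begin

text \<open>N x N real matrices are represented as functions nat => nat => real, only the
entries with indices in {1..N} being relevant.\<close>

definition mat_mult :: "nat \<Rightarrow> (nat \<Rightarrow> nat \<Rightarrow> real) \<Rightarrow> (nat \<Rightarrow> nat \<Rightarrow> real) \<Rightarrow> (nat \<Rightarrow> nat \<Rightarrow> real)" where
  "mat_mult N A B = (\<lambda>i j. \<Sum>k\<in>{1..N}. A i k * B k j)"

definition id_mat :: "nat \<Rightarrow> nat \<Rightarrow> real" where
  "id_mat = (\<lambda>i j. if i = j then 1 else 0)"

definition ergodicity_coeff :: "nat \<Rightarrow> (nat \<Rightarrow> nat \<Rightarrow> real) \<Rightarrow> real" where
  "ergodicity_coeff N A =
     Min ((\<lambda>(i,j). \<Sum>k\<in>{1..N}. min (A i k) (A j k)) ` ({1..N} \<times> {1..N}))"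

text \<open>blk r i is the block [i]_r of the partition at time r; a partition of {1..N}.\<close>
definition is_partition_fun :: "nat \<Rightarrow> (nat \<Rightarrow> nat set) \<Rightarrow> bool" where
  "is_partition_fun N P \<longleftrightarrow>
     (\<forall>i\<in>{1..N}. i \<in> P i \<and> P i \<subseteq> {1..N} \<and> (\<forall>j\<in>P i. P j = P i))"

definition A_mat :: "nat \<Rightarrow> real \<Rightarrow> (nat set \<Rightarrow> nat \<Rightarrow> 'x \<Rightarrow> real)
     \<Rightarrow> (nat \<Rightarrow> nat \<Rightarrow> nat set) \<Rightarrow> (nat \<Rightarrow> 'x) \<Rightarrow> nat \<Rightarrow> (nat \<Rightarrow> nat \<Rightarrow> real)" where
  "A_mat N \<gamma> \<omega> blk X r = (\<lambda>i j. (1 - \<gamma>) * id_mat i j + \<gamma> * \<omega> (blk r i) j (X r))"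

fun prod_A :: "nat \<Rightarrow> real \<Rightarrow> (nat set \<Rightarrow> nat \<Rightarrow> 'x \<Rightarrow> real)
     \<Rightarrow> (nat \<Rightarrow> nat \<Rightarrow> nat set) \<Rightarrow> (nat \<Rightarrow> 'x) \<Rightarrow> nat \<Rightarrow> nat \<Rightarrow> (nat \<Rightarrow> nat \<Rightarrow> real)" where
  "prod_A N \<gamma> \<omega> blk X n 0 = id_mat"
| "prod_A N \<gamma> \<omega> blk X n (Suc k) =
     mat_mult N (A_mat N \<gamma> \<omega> blk X (n + k)) (prod_A N \<gamma> \<omega> blk X n k)"

definition T_set :: "(nat \<Rightarrow> nat \<Rightarrow> nat set) \<Rightarrow> nat \<Rightarrow> nat \<Rightarrow> nat \<Rightarrow> nat \<Rightarrow> nat set" where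
  "T_set blk i j n m = {r. n \<le> r \<and> r < n + m \<and> blk r i = blk r j}"

definition G_val :: "nat \<Rightarrow> (nat \<Rightarrow> nat \<Rightarrow> nat set) \<Rightarrow> nat \<Rightarrow> nat \<Rightarrow> nat" where
  "G_val N blk n m = Min ((\<lambda>(i,j). card (T_set blk i j n m)) ` ({1..N} \<times> {1..N}))"

end

theory Submission
  imports Defs
begin

lemma id_sum: "i \<in> {1..N} \<Longrightarrow> (\<Sum>l\<in>{1..N}. id_mat i l * f l) = (f i :: real)"
proof -
  assume i: "i \<in> {1..N}"
  have "(\<Sum>l\<in>{1..N}. id_mat i l * f l) = (\<Sum>l\<in>{1..N}. if l = i then f l else 0)"
    by (intro sum.cong) (auto simp: id_mat_def)
  also have "\<dots> = f i" using i by (simp add: sum.delta')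
  finally show ?thesis .
qed

lemma P_bound:
  fixes \<gamma> :: real and \<omega> :: "nat set \<Rightarrow> nat \<Rightarrow> 'x \<Rightarrow> real"
  assumes gam: "0 < \<gamma>" "\<gamma> < 1"
    and w_nonneg: "\<And>S j Y. \<omega> S j Y \<ge> 0"
  shows "\<forall>i\<in>{1..N}. \<forall>k\<in>{1..N}. prod_A N \<gamma> \<omega> blk X n (Suc m) i k \<ge>
     (1-\<gamma>)^(Suc m) * id_mat i k + \<gamma>*(1-\<gamma>)^m * (\<Sum>t<Suc m. \<omega> (blk (n+t) i) k (X (n+t)))"
proof (induction m)
  case 0
  have "\<And>i k. k \<in> {1..N} \<Longrightarrow> (\<Sum>l\<in>{1..N}. ((1 - \<gamma>) * id_mat i l + \<gamma> * \<omega> (blk n i) l (X n)) * id_mat l k)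
        = (1 - \<gamma>) * id_mat i k + \<gamma> * \<omega> (blk n i) k (X n)"
    by (simp add: id_mat_def if_distrib cong: if_cong)
  then show ?case by (simp add: mat_mult_def A_mat_def)
next
  case (Suc m)
  let ?P = "prod_A N \<gamma> \<omega> blk X n (Suc m)"
  let ?W = "\<lambda>i l. \<omega> (blk (n + Suc m) i) l (X (n + Suc m))"
  let ?S = "\<lambda>i k. (\<Sum>t<Suc m. \<omega> (blk (n+t) i) k (X (n+t)))"
  have Sge: "?S i k \<ge> 0" for i k by (intro sum_nonneg) (use w_nonneg in auto)
  have idge: "id_mat i k \<ge> 0" for i k by (simp add: id_mat_def)
  have Pnn: "?P l k \<ge> 0" if "l \<in> {1..N}" "k \<in> {1..N}" for l k
  proof -
    have "0 \<le> (1-\<gamma>)^(Suc m) * id_mat l k + \<gamma>*(1-\<gamma>)^m * ?S l k"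
      using gam Sge[of l k] idge[of l k] by simp
    also have "\<dots> \<le> ?P l k" using Suc that by blast
    finally show ?thesis .
  qed
  show ?case
  proof (intro ballI)
    fix i k assume i: "i \<in> {1..N}" and k: "k \<in> {1..N}"
    have e: "prod_A N \<gamma> \<omega> blk X n (Suc (Suc m)) i k
       = (1-\<gamma>) * (\<Sum>l\<in>{1..N}. id_mat i l * ?P l k) + \<gamma> * (\<Sum>l\<in>{1..N}. ?W i l * ?P l k)"
    proof -
      have "prod_A N \<gamma> \<omega> blk X n (Suc (Suc m)) = mat_mult N (A_mat N \<gamma> \<omega> blk X (n + Suc m)) ?P"
        by (simp only: prod_A.simps(2))
      then have "prod_A N \<gamma> \<omega> blk X n (Suc (Suc m)) i k
          = (\<Sum>l\<in>{1..N}. (1-\<gamma>) * (id_mat i l * ?P l k) + \<gamma> * (?W i l * ?P l k))"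
        unfolding mat_mult_def A_mat_def by (simp del: prod_A.simps add: algebra_simps)
      then show ?thesis
        by (simp del: prod_A.simps add: sum.distrib sum_distrib_left)
    qed
    have e2: "(\<Sum>l\<in>{1..N}. id_mat i l * ?P l k) = ?P i k"
      using i by (rule id_sum)
    have e3: "(\<Sum>l\<in>{1..N}. ?W i l * ?P l k) \<ge> ?W i k * ?P k k"
    proof (rule member_le_sum[where f="\<lambda>l. ?W i l * ?P l k"])
      show "k \<in> {1..N}" by (rule k)
      show "0 \<le> ?W i l * ?P l k" if "l \<in> {1..N} - {k}" for l
        using that Pnn[of l k] k w_nonneg by (intro mult_nonneg_nonneg) auto
    qed simp
    have Pkk: "?P k k \<ge> (1-\<gamma>)^(Suc m)"
    proof -
      have "(1-\<gamma>)^(Suc m) \<le> (1-\<gamma>)^(Suc m) * id_mat k k + \<gamma>*(1-\<gamma>)^m * ?S k k"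
        using gam Sge[of k k] by (simp add: id_mat_def)
      also have "\<dots> \<le> ?P k k" using Suc k by blast
      finally show ?thesis .
    qed
    have Pik: "?P i k \<ge> (1-\<gamma>)^(Suc m) * id_mat i k + \<gamma>*(1-\<gamma>)^m * ?S i k" using Suc i k by blast
    have "prod_A N \<gamma> \<omega> blk X n (Suc (Suc m)) i k \<ge>
          (1-\<gamma>) * ((1-\<gamma>)^(Suc m) * id_mat i k + \<gamma>*(1-\<gamma>)^m * ?S i k) + \<gamma> * (?W i k * (1-\<gamma>)^(Suc m))"
    proof -
      have a: "(1-\<gamma>) * ((1-\<gamma>)^(Suc m) * id_mat i k + \<gamma>*(1-\<gamma>)^m * ?S i k) \<le> (1-\<gamma>) * ?P i k"
        using Pik gam by (intro mult_left_mono) auto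
      have b: "?W i k * (1-\<gamma>)^(Suc m) \<le> ?W i k * ?P k k"
        using Pkk w_nonneg by (intro mult_left_mono) auto
      have c: "\<gamma> * (?W i k * (1-\<gamma>)^(Suc m)) \<le> \<gamma> * (\<Sum>l\<in>{1..N}. ?W i l * ?P l k)"
        using b e3 gam by (intro mult_left_mono) auto
      show ?thesis unfolding e e2 using a c by linarith
    qed
    moreover have "(1-\<gamma>) * ((1-\<gamma>)^(Suc m) * id_mat i k + \<gamma>*(1-\<gamma>)^m * ?S i k) + \<gamma> * (?W i k * (1-\<gamma>)^(Suc m))
       = (1-\<gamma>)^(Suc (Suc m)) * id_mat i k + \<gamma>*(1-\<gamma>)^(Suc m) * (\<Sum>t<Suc (Suc m). \<omega> (blk (n+t) i) k (X (n+t)))"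
      by (simp add: algebra_simps)
    ultimately show "prod_A N \<gamma> \<omega> blk X n (Suc (Suc m)) i k \<ge>
       (1-\<gamma>)^(Suc (Suc m)) * id_mat i k + \<gamma>*(1-\<gamma>)^(Suc m) * (\<Sum>t<Suc (Suc m). \<omega> (blk (n+t) i) k (X (n+t)))"
      by linarith
  qed
qed

theorem lemma3p4:
  fixes N :: nat and \<gamma> :: real
    and \<omega> :: "nat set \<Rightarrow> nat \<Rightarrow> (nat \<Rightarrow> real ^ 'd) \<Rightarrow> real"
    and blk :: "nat \<Rightarrow> nat \<Rightarrow> nat set"
    and X :: "nat \<Rightarrow> (nat \<Rightarrow> real ^ 'd)"
    and n m :: nat
  assumes N2: "N \<ge> 2"
    and gam: "0 < \<gamma>" "\<gamma> < 1"
    and w_nonneg: "\<And>S j Y. \<omega> S j Y \<ge> 0"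
    and w_sum: "\<And>S Y. S \<subseteq> {1..N} \<Longrightarrow> S \<noteq> {} \<Longrightarrow> (\<Sum>j\<in>S. \<omega> S j Y) = 1"
    and w_zero: "\<And>S j Y. S \<subseteq> {1..N} \<Longrightarrow> S \<noteq> {} \<Longrightarrow> j \<notin> S \<Longrightarrow> \<omega> S j Y = 0"
    and parts: "\<And>r. is_partition_fun N (blk r)"
    and m1: "m \<ge> 1"
  shows "ergodicity_coeff N (prod_A N \<gamma> \<omega> blk X n m)
           \<ge> \<gamma> * (1 - \<gamma>) ^ (m - 1) * real (G_val N blk n m)"
proof -
  obtain m' where mm: "m = Suc m'" using m1 by (cases m) auto
  define c where "c = \<gamma> * (1 - \<gamma>) ^ m'"
  have c0: "c \<ge> 0" using gam by (simp add: c_def)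
  let ?P = "prod_A N \<gamma> \<omega> blk X n m"
  let ?W = "\<lambda>t i k. \<omega> (blk (n+t) i) k (X (n+t))"
  have rowsum: "(\<Sum>k\<in>{1..N}. \<omega> (blk r i) k Y) = 1" if i: "i \<in> {1..N}" for r i Y
  proof -
    have p: "i \<in> blk r i" "blk r i \<subseteq> {1..N}" using parts[of r] i unfolding is_partition_fun_def by blast+
    have "(\<Sum>k\<in>{1..N}. \<omega> (blk r i) k Y) = (\<Sum>k\<in>blk r i. \<omega> (blk r i) k Y)"
    proof (rule sum.mono_neutral_right)
      show "\<forall>k\<in>{1..N} - blk r i. \<omega> (blk r i) k Y = 0"
        using p w_zero[of "blk r i"] by blast
    qed (use p in blast)+
    also have "\<dots> = 1" using p by (intro w_sum) auto
    finally show ?thesis .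
  qed
  have Pb: "?P i k \<ge> c * (\<Sum>t<m. ?W t i k)" if "i \<in> {1..N}" "k \<in> {1..N}" for i k
  proof -
    have "?P i k \<ge> (1-\<gamma>)^m * id_mat i k + c * (\<Sum>t<m. ?W t i k)"
      using P_bound[where \<omega>=\<omega>, OF gam w_nonneg, where N=N and blk=blk and X=X and n=n and m=m'] that unfolding c_def mm[symmetric] by blast
    moreover have "(1-\<gamma>)^m * id_mat i k \<ge> 0" using gam by (simp add: id_mat_def)
    ultimately show ?thesis by linarith
  qed
  have pair: "c * real (card (T_set blk i j n m)) \<le> (\<Sum>k\<in>{1..N}. min (?P i k) (?P j k))"
    if i: "i \<in> {1..N}" and j: "j \<in> {1..N}" for i j
  proof -
    define T' where "T' = {t \<in> {..<m}. blk (n+t) i = blk (n+t) j}"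
    have fT: "finite T'" unfolding T'_def by auto
    have mn: "c * (\<Sum>t\<in>T'. ?W t i k) \<le> min (?P i k) (?P j k)" if k: "k \<in> {1..N}" for k
    proof -
      have s1: "(\<Sum>t\<in>T'. ?W t i k) \<le> (\<Sum>t<m. ?W t i k)"
        by (intro sum_mono2) (auto simp: T'_def w_nonneg)
      have s2: "(\<Sum>t\<in>T'. ?W t i k) = (\<Sum>t\<in>T'. ?W t j k)"
        by (intro sum.cong) (auto simp: T'_def)
      have s3: "(\<Sum>t\<in>T'. ?W t j k) \<le> (\<Sum>t<m. ?W t j k)"
        by (intro sum_mono2) (auto simp: T'_def w_nonneg)
      have "c * (\<Sum>t\<in>T'. ?W t i k) \<le> ?P i k"
        using mult_left_mono[OF s1 c0] Pb[OF i k] by linarith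
      moreover have "c * (\<Sum>t\<in>T'. ?W t i k) \<le> ?P j k"
        using mult_left_mono[OF s3 c0] Pb[OF j k] s2 by simp
      ultimately show ?thesis by simp
    qed
    have "(\<Sum>k\<in>{1..N}. c * (\<Sum>t\<in>T'. ?W t i k)) = c * (\<Sum>k\<in>{1..N}. \<Sum>t\<in>T'. ?W t i k)"
      by (simp only: sum_distrib_left)
    also have "\<dots> = c * (\<Sum>t\<in>T'. \<Sum>k\<in>{1..N}. ?W t i k)"
      by (rule arg_cong[where f="(*) c"], rule sum.swap)
    also have "\<dots> = c * real (card T')" using rowsum[OF i] by simp
    finally have A: "(\<Sum>k\<in>{1..N}. c * (\<Sum>t\<in>T'. ?W t i k)) = c * real (card T')" .
    have "T_set blk i j n m = (\<lambda>t. n + t) ` T'"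
    proof (rule set_eqI, rule iffI)
      fix r assume "r \<in> T_set blk i j n m"
      then show "r \<in> (\<lambda>t. n + t) ` T'" unfolding T_set_def T'_def
        by (intro image_eqI[of _ _ "r - n"]) auto
    qed (auto simp: T_set_def T'_def)
    then have "card (T_set blk i j n m) = card T'" by (simp add: card_image)
    with A have "c * real (card (T_set blk i j n m)) = (\<Sum>k\<in>{1..N}. c * (\<Sum>t\<in>T'. ?W t i k))" by simp
    also have "\<dots> \<le> (\<Sum>k\<in>{1..N}. min (?P i k) (?P j k))" by (intro sum_mono mn)
    finally show ?thesis .
  qed
  let ?F = "(\<lambda>(i,j). \<Sum>k\<in>{1..N}. min (?P i k) (?P j k))"
  have ne: "{1..N} \<times> {1..N} \<noteq> {}" using N2 by auto
  have "ergodicity_coeff N ?P \<in> ?F ` ({1..N} \<times> {1..N})"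
    unfolding ergodicity_coeff_def using ne by (intro Min_in) auto
  then obtain i j where ij: "i \<in> {1..N}" "j \<in> {1..N}" and eq: "ergodicity_coeff N ?P = ?F (i,j)" by auto
  have "G_val N blk n m \<le> card (T_set blk i j n m)"
    unfolding G_val_def using ij by (intro Min_le) auto
  then have "c * real (G_val N blk n m) \<le> c * real (card (T_set blk i j n m))"
    using c0 by (intro mult_left_mono) auto
  also have "\<dots> \<le> ergodicity_coeff N ?P" using pair[OF ij] eq by simp
  moreover have "m - 1 = m'" using mm by simp
  ultimately show ?thesis by (simp add: c_def)
qed

end
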